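(* Let $f:\mathbb{R}^p\to\mathbb{R}$ be convex and twice continuously differentiable, let $g_1,\dots,g_r:\mathbb{R}^p\to\mathbb{R}$ be affine, and let $h_1,\dots,h_s:\mathbb{R}^p\to\mathbb{R}$ be convex and twice continuously differentiable. For $\rho\ge 0$ put $$\mathcal{E}_\rho(\mathbf{x})=f(\mathbf{x})+\rho\sum_{i=1}^r|g_i(\mathbf{x})|+\rho\sum_{j=1}^s\max\{0,h_j(\mathbf{x})\}.$$ 1. (Uniqueness) If $\mathcal{E}_\rho$ is strictly convex, then it has at most one minimizer. 2. (Continuity) Let $\rho_0>0$. If there is an open interval $I\ni\rho_0$ of nonnegative numbers such that $\mathcal{E}_\rho$ is strictly convex and coercive for every $\rho\in I$, then for every $\rho\in I$ the function $\mathcal{E}_\rho$ has a unique minimizer $\mathbf{x}(\rho)$, and the map $\rho\mapsto\mathbf{x}(\rho)$ is continuous at $\rho_0$. 3. (Continuity of coefficients) Suppose in addition to the hypotheses of part 2 that for every $\rho\in I$ the vectors $\{\nabla g_i(\mathbf{x}(\rho)): g_i(\mathbf{x}(\rho))=0\}\cup\{\nabla h_j(\mathbf{x}(\rho)): h_j(\mathbf{x}(\rho))=0\}$ are linearly independent. Then for every $\rho\in I$ there is a unique coefficient vector $(s_1(\rho),\dots,s_r(\rho),t_1(\rho),\dots,t_s(\rho))$ satisfying the optimality condition below at $\mathbf{x}=\mathbf{x}(\rho)$, and the maps $\rho\mapsto s_i(\rho)$ and $\rho\mapsto t_j(\rho)$ are continuous at $\rho_0$.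
   Context: Optimality condition: for $\rho>0$ and $\mathbf{x}\in\mathbb{R}^p$, coefficients $s_i,t_j$ satisfy the optimality condition at $\mathbf{x}$ if $$\mathbf{0}=\nabla f(\mathbf{x})+\rho\sum_{i=1}^r s_i\nabla g_i(\mathbf{x})+\rho\sum_{j=1}^s t_j\nabla h_j(\mathbf{x}),$$ where $s_i=-1$ if $g_i(\mathbf{x})<0$, $s_i\in[-1,1]$ if $g_i(\mathbf{x})=0$, $s_i=1$ if $g_i(\mathbf{x})>0$, and $t_j=0$ if $h_j(\mathbf{x})<0$, $t_j\in[0,1]$ if $h_j(\mathbf{x})=0$, $t_j=1$ if $h_j(\mathbf{x})>0$. (A point $\mathbf{x}$ minimizes $\mathcal{E}_\rho$ iff such coefficients exist.) A function is coercive if it tends to $+\infty$ as $\|\mathbf{x}\|\to\infty$. *)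

theory Defs
  imports "HOL-Analysis.Analysis"
begin

definition strictly_convex_on :: "'a::real_vector set \<Rightarrow> ('a \<Rightarrow> real) \<Rightarrow> bool" where
  "strictly_convex_on S f \<longleftrightarrow> convex S \<and>
     (\<forall>x\<in>S. \<forall>y\<in>S. x \<noteq> y \<longrightarrow>
        (\<forall>u::real. 0 < u \<and> u < 1 \<longrightarrow> f ((1 - u) *\<^sub>R x + u *\<^sub>R y) < (1 - u) * f x + u * f y))"

definition twice_cont_diff :: "('a::euclidean_space \<Rightarrow> real) \<Rightarrow> bool" where
  "twice_cont_diff f \<longleftrightarrow>
     (\<exists>(G :: 'a \<Rightarrow> 'a \<Rightarrow>\<^sub>L real) (H :: 'a \<Rightarrow> 'a \<Rightarrow>\<^sub>L ('a \<Rightarrow>\<^sub>L real)).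
        (\<forall>x. (f has_derivative blinfun_apply (G x)) (at x)) \<and>
        (\<forall>x. (G has_derivative blinfun_apply (H x)) (at x)) \<and>
        continuous_on UNIV H)"

definition affine_fun :: "('a::real_inner \<Rightarrow> real) \<Rightarrow> bool" where
  "affine_fun g \<longleftrightarrow> (\<exists>a b. \<forall>x. g x = inner a x + b)"

definition grad :: "('a::real_inner \<Rightarrow> real) \<Rightarrow> 'a \<Rightarrow> 'a" where
  "grad f x = (THE D. GDERIV f x :> D)"

definition coercive :: "('a::real_normed_vector \<Rightarrow> real) \<Rightarrow> bool" where
  "coercive F \<longleftrightarrow> filterlim F at_top at_infinity"

definition is_minimizer :: "('a \<Rightarrow> real) \<Rightarrow> 'a \<Rightarrow> bool" where
  "is_minimizer F x \<longleftrightarrow> (\<forall>z. F x \<le> F z)"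

definition penE :: "('a \<Rightarrow> real) \<Rightarrow> (nat \<Rightarrow> 'a \<Rightarrow> real) \<Rightarrow> nat \<Rightarrow> (nat \<Rightarrow> 'a \<Rightarrow> real) \<Rightarrow> nat
     \<Rightarrow> real \<Rightarrow> 'a \<Rightarrow> real" where
  "penE f g r h s \<rho> x = f x + \<rho> * (\<Sum>i<r. \<bar>g i x\<bar>) + \<rho> * (\<Sum>j<s. max 0 (h j x))"

definition opt_cond :: "('a::real_inner \<Rightarrow> real) \<Rightarrow> (nat \<Rightarrow> 'a \<Rightarrow> real) \<Rightarrow> nat
     \<Rightarrow> (nat \<Rightarrow> 'a \<Rightarrow> real) \<Rightarrow> nat \<Rightarrow> real \<Rightarrow> 'a \<Rightarrow> (nat \<Rightarrow> real) \<Rightarrow> (nat \<Rightarrow> real) \<Rightarrow> bool" where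
  "opt_cond f g r h s \<rho> x sc tc \<longleftrightarrow>
     grad f x + \<rho> *\<^sub>R (\<Sum>i<r. sc i *\<^sub>R grad (g i) x) + \<rho> *\<^sub>R (\<Sum>j<s. tc j *\<^sub>R grad (h j) x) = 0 \<and>
     (\<forall>i<r. (g i x < 0 \<longrightarrow> sc i = -1) \<and> (g i x = 0 \<longrightarrow> -1 \<le> sc i \<and> sc i \<le> 1) \<and>
            (g i x > 0 \<longrightarrow> sc i = 1)) \<and>
     (\<forall>j<s. (h j x < 0 \<longrightarrow> tc j = 0) \<and> (h j x = 0 \<longrightarrow> 0 \<le> tc j \<and> tc j \<le> 1) \<and>
            (h j x > 0 \<longrightarrow> tc j = 1))"

definition active_grads_indep :: "(nat \<Rightarrow> 'a::real_inner \<Rightarrow> real) \<Rightarrow> nat \<Rightarrow> (nat \<Rightarrow> 'a \<Rightarrow> real) \<Rightarrow> nat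
     \<Rightarrow> 'a \<Rightarrow> bool" where
  "active_grads_indep g r h s x \<longleftrightarrow>
     (let A = Inl ` {i. i < r \<and> g i x = 0} \<union> Inr ` {j. j < s \<and> h j x = 0};
          V = (\<lambda>k. case k of Inl i \<Rightarrow> grad (g i) x | Inr j \<Rightarrow> grad (h j) x)
      in inj_on V A \<and> independent (V ` A))"

end

theory Submission
  imports Defs
begin


lemma grad_eq:
  fixes \<phi> :: "'a::real_inner \<Rightarrow> real"
  assumes "GDERIV \<phi> x :> D" shows "grad \<phi> x = D"
  unfolding grad_def
proof (rule the_equality[where P="\<lambda>D. GDERIV \<phi> x :> D", OF assms])
  fix D' assume "GDERIV \<phi> x :> D'"
  then have "(\<lambda>h. inner h D') = (\<lambda>h. inner h D)"
    using assms unfolding gderiv_def by (rule has_derivative_unique)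
  then have "inner (D' - D) D' = inner (D' - D) D" by metis
  then have "inner (D' - D) (D' - D) = 0" by (simp add: inner_diff_right)
  then show "D' = D" by simp
qed

lemma linear_rep:
  fixes L :: "'a::euclidean_space \<Rightarrow> real"
  assumes "linear L"
  shows "L = (\<lambda>h. inner h (\<Sum>b\<in>Basis. L b *\<^sub>R b))"
proof
  fix h
  have "L h = L (\<Sum>b\<in>Basis. (h \<bullet> b) *\<^sub>R b)" by (simp add: euclidean_representation)
  also have "\<dots> = (\<Sum>b\<in>Basis. (h \<bullet> b) * L b)"
    using assms by (simp add: linear_sum linear_scale)
  also have "\<dots> = inner h (\<Sum>b\<in>Basis. L b *\<^sub>R b)"
    by (simp add: inner_sum_right mult.commute)
  finally show "L h = inner h (\<Sum>b\<in>Basis. L b *\<^sub>R b)" .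
qed

lemma C2_grad:
  fixes \<phi> :: "'a::euclidean_space \<Rightarrow> real"
  assumes "twice_cont_diff \<phi>"
  shows "(\<forall>x. (\<phi> has_derivative (\<lambda>d. inner d (grad \<phi> x))) (at x)) \<and> continuous_on UNIV (grad \<phi>)"
proof -
  obtain G :: "'a \<Rightarrow> 'a \<Rightarrow>\<^sub>L real" and H :: "'a \<Rightarrow> 'a \<Rightarrow>\<^sub>L ('a \<Rightarrow>\<^sub>L real)" where
    G: "\<forall>x. (\<phi> has_derivative blinfun_apply (G x)) (at x)" and
    H: "\<forall>x. (G has_derivative blinfun_apply (H x)) (at x)"
    using assms unfolding twice_cont_diff_def by blast
  have gr: "grad \<phi> x = (\<Sum>b\<in>Basis. G x b *\<^sub>R b)" for x
  proof (rule grad_eq)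
    have "blinfun_apply (G x) = (\<lambda>h. inner h (\<Sum>b\<in>Basis. G x b *\<^sub>R b))"
      by (rule linear_rep) (simp add: blinfun.bounded_linear_right bounded_linear.linear)
    then show "GDERIV \<phi> x :> (\<Sum>b\<in>Basis. G x b *\<^sub>R b)"
      unfolding gderiv_def using G by metis
  qed
  have "continuous_on UNIV G"
    using H by (meson has_derivative_continuous continuous_at_imp_continuous_on)
  then have "continuous_on UNIV (\<lambda>x. \<Sum>b\<in>Basis. G x b *\<^sub>R b)"
    by (intro continuous_intros) auto
  moreover have "blinfun_apply (G x) = (\<lambda>d. inner d (grad \<phi> x))" for x
    unfolding gr by (rule linear_rep) (simp add: blinfun.bounded_linear_right bounded_linear.linear)
  ultimately show ?thesis using G gr by (metis (no_types, lifting) ext)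
qed

lemma aff_grad:
  fixes \<phi> :: "'a::real_inner \<Rightarrow> real"
  assumes "affine_fun \<phi>"
  obtains a where "\<forall>x. (\<phi> has_derivative (\<lambda>d. inner d a)) (at x)" "\<forall>x. grad \<phi> x = a"
proof -
  obtain a b where ab: "\<forall>x. \<phi> x = inner a x + b" using assms unfolding affine_fun_def by blast
  have e: "\<phi> = (\<lambda>x. inner a x + b)" using ab by auto
  have d: "(\<phi> has_derivative (\<lambda>d. inner d a)) (at x)" for x
    unfolding e by (auto intro!: derivative_eq_intros simp: inner_commute)
  show ?thesis
    by (rule that[of a]) (use d in \<open>auto intro!: grad_eq simp: gderiv_def\<close>)
qed



lemma quot_lin:
  fixes \<phi> :: "'a::real_inner \<Rightarrow> real"
  assumes "(\<phi> has_derivative (\<lambda>d. inner d v)) (at x)"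
  shows "((\<lambda>t. (\<phi> (x + t *\<^sub>R d) - \<phi> x) / t) \<longlongrightarrow> inner d v) (at_right 0)"
proof -
  have l: "((\<lambda>t. x + t *\<^sub>R d) has_derivative (\<lambda>t. t *\<^sub>R d)) (at 0)"
    by (auto intro!: derivative_eq_intros)
  have "((\<phi> \<circ> (\<lambda>t. x + t *\<^sub>R d)) has_derivative ((\<lambda>d. inner d v) \<circ> (\<lambda>t. t *\<^sub>R d))) (at 0)"
    by (rule diff_chain_at[OF l]) (simp add: assms)
  then have "((\<lambda>t. \<phi> (x + t *\<^sub>R d)) has_field_derivative inner d v) (at 0)"
    unfolding has_field_derivative_def by (simp add: o_def mult.commute[of _ "inner d v"])
  then have "((\<lambda>t. \<phi> (x + t *\<^sub>R d)) has_field_derivative inner d v) (at 0 within {0<..})"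
    by (rule has_field_derivative_at_within)
  then show ?thesis unfolding has_field_derivative_iff by simp
qed

lemma cont_line:
  fixes \<phi> :: "'a::real_inner \<Rightarrow> real"
  assumes "(\<phi> has_derivative (\<lambda>d. inner d v)) (at x)"
  shows "((\<lambda>t. \<phi> (x + t *\<^sub>R d)) \<longlongrightarrow> \<phi> x) (at_right 0)"
proof -
  have "isCont \<phi> x" using assms by (rule has_derivative_continuous)
  moreover have "((\<lambda>t::real. x + t *\<^sub>R d) \<longlongrightarrow> x) (at_right 0)"
    by (rule tendsto_eq_intros) (auto intro!: tendsto_eq_intros)
  ultimately show ?thesis by (rule isCont_tendsto_compose)
qed

lemma ev_pos: "eventually (\<lambda>t::real. t > 0) (at_right 0)"
  by (simp add: eventually_at_right_less)

lemma quot_abs: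
  fixes \<phi> :: "'a::real_inner \<Rightarrow> real"
  assumes "(\<phi> has_derivative (\<lambda>d. inner d v)) (at x)"
  shows "((\<lambda>t. (\<bar>\<phi> (x + t *\<^sub>R d)\<bar> - \<bar>\<phi> x\<bar>) / t) \<longlongrightarrow>
     (if \<phi> x > 0 then inner d v else if \<phi> x < 0 then - inner d v else \<bar>inner d v\<bar>)) (at_right 0)"
proof -
  note q = quot_lin[OF assms, of d] and c = cont_line[OF assms, of d]
  consider "\<phi> x > 0" | "\<phi> x < 0" | "\<phi> x = 0" by linarith
  then show ?thesis
  proof cases
    case 1
    have "eventually (\<lambda>t. \<phi> (x + t *\<^sub>R d) > 0) (at_right 0)"
      using c 1 by (rule order_tendstoD)
    then have "eventually (\<lambda>t. (\<phi> (x + t *\<^sub>R d) - \<phi> x) / t = (\<bar>\<phi> (x + t *\<^sub>R d)\<bar> - \<bar>\<phi> x\<bar>) / t) (at_right 0)"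
      by eventually_elim (use 1 in auto)
    with q show ?thesis using 1 by (auto intro: Lim_transform_eventually)
  next
    case 2
    have "eventually (\<lambda>t. \<phi> (x + t *\<^sub>R d) < 0) (at_right 0)"
      using c 2 by (rule order_tendstoD)
    then have "eventually (\<lambda>t. - ((\<phi> (x + t *\<^sub>R d) - \<phi> x) / t) = (\<bar>\<phi> (x + t *\<^sub>R d)\<bar> - \<bar>\<phi> x\<bar>) / t) (at_right 0)"
      by eventually_elim (use 2 in \<open>auto simp: minus_divide_left\<close>)
    moreover have "((\<lambda>t. - ((\<phi> (x + t *\<^sub>R d) - \<phi> x) / t)) \<longlongrightarrow> - inner d v) (at_right 0)"
      using q by (rule tendsto_minus)
    ultimately show ?thesis using 2 by (auto intro: Lim_transform_eventually)
  next
    case 3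
    have "eventually (\<lambda>t. \<bar>(\<phi> (x + t *\<^sub>R d) - \<phi> x) / t\<bar> = (\<bar>\<phi> (x + t *\<^sub>R d)\<bar> - \<bar>\<phi> x\<bar>) / t) (at_right 0)"
      using ev_pos by eventually_elim (use 3 in auto)
    moreover have "((\<lambda>t. \<bar>(\<phi> (x + t *\<^sub>R d) - \<phi> x) / t\<bar>) \<longlongrightarrow> \<bar>inner d v\<bar>) (at_right 0)"
      using q by (rule tendsto_rabs)
    ultimately show ?thesis using 3 by (auto intro: Lim_transform_eventually)
  qed
qed

lemma quot_max:
  fixes \<phi> :: "'a::real_inner \<Rightarrow> real"
  assumes "(\<phi> has_derivative (\<lambda>d. inner d v)) (at x)"
  shows "((\<lambda>t. (max 0 (\<phi> (x + t *\<^sub>R d)) - max 0 (\<phi> x)) / t) \<longlongrightarrow>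
     (if \<phi> x > 0 then inner d v else if \<phi> x < 0 then 0 else max 0 (inner d v))) (at_right 0)"
proof -
  note q = quot_lin[OF assms, of d] and c = cont_line[OF assms, of d]
  consider "\<phi> x > 0" | "\<phi> x < 0" | "\<phi> x = 0" by linarith
  then show ?thesis
  proof cases
    case 1
    have "eventually (\<lambda>t. \<phi> (x + t *\<^sub>R d) > 0) (at_right 0)"
      using c 1 by (rule order_tendstoD)
    then have "eventually (\<lambda>t. (\<phi> (x + t *\<^sub>R d) - \<phi> x) / t = (max 0 (\<phi> (x + t *\<^sub>R d)) - max 0 (\<phi> x)) / t) (at_right 0)"
      by eventually_elim (use 1 in auto)
    with q show ?thesis using 1 by (auto intro: Lim_transform_eventually)
  next
    case 2
    have "eventually (\<lambda>t. \<phi> (x + t *\<^sub>R d) < 0) (at_right 0)"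
      using c 2 by (rule order_tendstoD)
    then have "eventually (\<lambda>t. 0 = (max 0 (\<phi> (x + t *\<^sub>R d)) - max 0 (\<phi> x)) / t) (at_right 0)"
      by eventually_elim (use 2 in auto)
    then show ?thesis using 2 by (auto intro: Lim_transform_eventually)
  next
    case 3
    have "eventually (\<lambda>t. max 0 ((\<phi> (x + t *\<^sub>R d) - \<phi> x) / t) = (max 0 (\<phi> (x + t *\<^sub>R d)) - max 0 (\<phi> x)) / t) (at_right 0)"
      using ev_pos by eventually_elim (use 3 in \<open>auto simp: max_def field_simps\<close>)
    moreover have "((\<lambda>t. max 0 ((\<phi> (x + t *\<^sub>R d) - \<phi> x) / t)) \<longlongrightarrow> max 0 (inner d v)) (at_right 0)"
      using q by (intro tendsto_max tendsto_const)
    ultimately show ?thesis using 3 by (auto intro: Lim_transform_eventually)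
  qed
qed



definition boxcomb :: "nat \<Rightarrow> (nat \<Rightarrow> real) \<Rightarrow> (nat \<Rightarrow> real) \<Rightarrow> (nat \<Rightarrow> 'a::real_vector) \<Rightarrow> 'a set" where
  "boxcomb n lo hi v = {\<Sum>k<n. cf k *\<^sub>R v k | cf. \<forall>k<n. lo k \<le> cf k \<and> cf k \<le> hi k}"

lemma boxcomb_Suc:
  "boxcomb (Suc n) lo hi v = {x + y | x y. x \<in> boxcomb n lo hi v \<and> y \<in> (\<lambda>t. t *\<^sub>R v n) ` {lo n..hi n}}"
proof (intro set_eqI iffI)
  fix z assume "z \<in> boxcomb (Suc n) lo hi v"
  then obtain cf where z: "z = (\<Sum>k<Suc n. cf k *\<^sub>R v k)" and b: "\<forall>k<Suc n. lo k \<le> cf k \<and> cf k \<le> hi k"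
    unfolding boxcomb_def by blast
  have "(\<Sum>k<n. cf k *\<^sub>R v k) \<in> boxcomb n lo hi v" unfolding boxcomb_def using b by auto
  moreover have "cf n *\<^sub>R v n \<in> (\<lambda>t. t *\<^sub>R v n) ` {lo n..hi n}" using b by auto
  ultimately show "z \<in> {x + y | x y. x \<in> boxcomb n lo hi v \<and> y \<in> (\<lambda>t. t *\<^sub>R v n) ` {lo n..hi n}}"
    unfolding z by auto
next
  fix z assume "z \<in> {x + y | x y. x \<in> boxcomb n lo hi v \<and> y \<in> (\<lambda>t. t *\<^sub>R v n) ` {lo n..hi n}}"
  then obtain cf t where z: "z = (\<Sum>k<n. cf k *\<^sub>R v k) + t *\<^sub>R v n" and b: "\<forall>k<n. lo k \<le> cf k \<and> cf k \<le> hi k"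
    and t: "lo n \<le> t" "t \<le> hi n"
    unfolding boxcomb_def by auto
  define cf' where "cf' = cf(n := t)"
  have "(\<Sum>k<n. cf' k *\<^sub>R v k) = (\<Sum>k<n. cf k *\<^sub>R v k)"
    unfolding cf'_def by (intro sum.cong) auto
  then have "z = (\<Sum>k<Suc n. cf' k *\<^sub>R v k)" unfolding z by (simp add: cf'_def)
  moreover have "\<forall>k<Suc n. lo k \<le> cf' k \<and> cf' k \<le> hi k" using b t unfolding cf'_def by (auto simp: less_Suc_eq)
  ultimately show "z \<in> boxcomb (Suc n) lo hi v" unfolding boxcomb_def by blast
qed

lemma boxcomb_compact:
  fixes v :: "nat \<Rightarrow> 'a::real_normed_vector"
  shows "compact (boxcomb n lo hi v)"
proof (induction n)
  case 0
  have "boxcomb 0 lo hi v = {0}" unfolding boxcomb_def by auto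
  then show ?case by simp
next
  case (Suc n)
  have "compact ((\<lambda>t. t *\<^sub>R v n) ` {lo n..hi n})"
    by (intro compact_continuous_image continuous_intros) auto
  then show ?case unfolding boxcomb_Suc using Suc by (intro compact_sums)
qed

definition box2 :: "nat \<Rightarrow> (nat \<Rightarrow> real) \<Rightarrow> (nat \<Rightarrow> real) \<Rightarrow> (nat \<Rightarrow> 'a::real_vector) \<Rightarrow>
   nat \<Rightarrow> (nat \<Rightarrow> real) \<Rightarrow> (nat \<Rightarrow> real) \<Rightarrow> (nat \<Rightarrow> 'a) \<Rightarrow> 'a set" where
  "box2 n lo hi v m lo' hi' w = {(\<Sum>k<n. cf k *\<^sub>R v k) + (\<Sum>k<m. cf' k *\<^sub>R w k) | cf cf'.
      (\<forall>k<n. lo k \<le> cf k \<and> cf k \<le> hi k) \<and> (\<forall>k<m. lo' k \<le> cf' k \<and> cf' k \<le> hi' k)}"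

lemma box2_eq: "box2 n lo hi v m lo' hi' w = {x + y | x y. x \<in> boxcomb n lo hi v \<and> y \<in> boxcomb m lo' hi' w}"
  unfolding box2_def boxcomb_def by blast

lemma box2_compact:
  fixes v :: "nat \<Rightarrow> 'a::real_normed_vector"
  shows "compact (box2 n lo hi v m lo' hi' w)"
  by (simp only: box2_eq) (rule compact_sums[OF boxcomb_compact boxcomb_compact])

lemma box2_convex: "convex (box2 n lo hi v m lo' hi' w)"
  unfolding convex_def
proof (intro ballI allI impI)
  fix x y and u \<mu> :: real
  assume "x \<in> box2 n lo hi v m lo' hi' w" "y \<in> box2 n lo hi v m lo' hi' w" and u: "0 \<le> u" "0 \<le> \<mu>" "u + \<mu> = 1"
  then obtain a a' b b' where x: "x = (\<Sum>k<n. a k *\<^sub>R v k) + (\<Sum>k<m. a' k *\<^sub>R w k)"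
    and y: "y = (\<Sum>k<n. b k *\<^sub>R v k) + (\<Sum>k<m. b' k *\<^sub>R w k)"
    and ba: "\<forall>k<n. lo k \<le> a k \<and> a k \<le> hi k" "\<forall>k<m. lo' k \<le> a' k \<and> a' k \<le> hi' k"
    and bb: "\<forall>k<n. lo k \<le> b k \<and> b k \<le> hi k" "\<forall>k<m. lo' k \<le> b' k \<and> b' k \<le> hi' k"
    unfolding box2_def by blast
  have cvx: "lo \<le> u * p + \<mu> * q \<and> u * p + \<mu> * q \<le> hi" if "lo \<le> p" "p \<le> hi" "lo \<le> q" "q \<le> hi" for lo hi p q :: real
  proof -
    have "u * lo \<le> u * p" "\<mu> * lo \<le> \<mu> * q" "u * p \<le> u * hi" "\<mu> * q \<le> \<mu> * hi"
      using that u by (auto intro: mult_left_mono)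
    moreover have "u * lo + \<mu> * lo = lo" "u * hi + \<mu> * hi = hi" using u(3) by (metis distrib_right mult_1)+
    ultimately show ?thesis by linarith
  qed
  have "u *\<^sub>R x + \<mu> *\<^sub>R y = (\<Sum>k<n. (u * a k + \<mu> * b k) *\<^sub>R v k) + (\<Sum>k<m. (u * a' k + \<mu> * b' k) *\<^sub>R w k)"
    unfolding x y by (simp add: scaleR_add_right scaleR_sum_right sum.distrib scaleR_add_left algebra_simps)
  moreover have "\<forall>k<n. lo k \<le> u * a k + \<mu> * b k \<and> u * a k + \<mu> * b k \<le> hi k" using ba bb cvx by blast
  moreover have "\<forall>k<m. lo' k \<le> u * a' k + \<mu> * b' k \<and> u * a' k + \<mu> * b' k \<le> hi' k" using ba bb cvx by blast
  ultimately show "u *\<^sub>R x + \<mu> *\<^sub>R y \<in> box2 n lo hi v m lo' hi' w" unfolding box2_def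
    by (intro CollectI exI[of _ "\<lambda>k. u * a k + \<mu> * b k"] exI[of _ "\<lambda>k. u * a' k + \<mu> * b' k"]) auto
qed

lemma duality:
  fixes c :: "'a::euclidean_space" and n m :: nat and v w :: "nat \<Rightarrow> 'a" and lo hi lo' hi' :: "nat \<Rightarrow> real"
  assumes lh: "\<forall>k<n. lo k \<le> hi k" "\<forall>k<m. lo' k \<le> hi' k"
    and ineq: "\<forall>d. c \<bullet> d + (\<Sum>k<n. max (lo k * (v k \<bullet> d)) (hi k * (v k \<bullet> d)))
                  + (\<Sum>k<m. max (lo' k * (w k \<bullet> d)) (hi' k * (w k \<bullet> d))) \<ge> 0"
  shows "\<exists>sc tc. (\<forall>k<n. lo k \<le> sc k \<and> sc k \<le> hi k) \<and> (\<forall>k<m. lo' k \<le> tc k \<and> tc k \<le> hi' k) \<and>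
     c + (\<Sum>k<n. sc k *\<^sub>R v k) + (\<Sum>k<m. tc k *\<^sub>R w k) = 0"
proof (rule ccontr)
  assume na: "\<not> ?thesis"
  let ?K = "box2 n lo hi v m lo' hi' w"
  have nK: "- c \<notin> ?K"
  proof
    assume "- c \<in> ?K"
    then obtain sc tc where "- c = (\<Sum>k<n. sc k *\<^sub>R v k) + (\<Sum>k<m. tc k *\<^sub>R w k)"
      "\<forall>k<n. lo k \<le> sc k \<and> sc k \<le> hi k" "\<forall>k<m. lo' k \<le> tc k \<and> tc k \<le> hi' k"
      unfolding box2_def by blast
    moreover from this(1) have "c + (\<Sum>k<n. sc k *\<^sub>R v k) + (\<Sum>k<m. tc k *\<^sub>R w k) = 0"
      by (metis add.assoc add.right_inverse)
    ultimately show False using na by blast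
  qed
  then obtain a b where ab: "inner a (- c) < b" "\<forall>x\<in>?K. inner a x > b"
    using separating_hyperplane_closed_point[OF box2_convex compact_imp_closed[OF box2_compact] nK] by blast
  define d where "d = - a"
  define sc where "sc k = (if lo k * (v k \<bullet> d) \<ge> hi k * (v k \<bullet> d) then lo k else hi k)" for k
  define tc where "tc k = (if lo' k * (w k \<bullet> d) \<ge> hi' k * (w k \<bullet> d) then lo' k else hi' k)" for k
  define x where "x = (\<Sum>k<n. sc k *\<^sub>R v k) + (\<Sum>k<m. tc k *\<^sub>R w k)"
  have "x \<in> ?K" unfolding x_def box2_def using lh
    by (intro CollectI exI[of _ sc] exI[of _ tc] conjI refl allI impI) (simp_all add: sc_def tc_def)
  then have "inner a x > b" using ab by blast
  have "x \<bullet> d = (\<Sum>k<n. max (lo k * (v k \<bullet> d)) (hi k * (v k \<bullet> d)))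
                  + (\<Sum>k<m. max (lo' k * (w k \<bullet> d)) (hi' k * (w k \<bullet> d)))"
    unfolding x_def inner_add_left inner_sum_left
  proof (intro arg_cong2[where f="(+)"] sum.cong refl)
    fix k show "(sc k *\<^sub>R v k) \<bullet> d = max (lo k * (v k \<bullet> d)) (hi k * (v k \<bullet> d))"
      unfolding sc_def inner_scaleR_left by (simp add: max_def)
  next
    fix k show "(tc k *\<^sub>R w k) \<bullet> d = max (lo' k * (w k \<bullet> d)) (hi' k * (w k \<bullet> d))"
      unfolding tc_def inner_scaleR_left by (simp add: max_def)
  qed
  then have "c \<bullet> d + x \<bullet> d \<ge> 0" using spec[OF ineq, of d] by linarith
  moreover have "c \<bullet> d = inner a (- c)" "x \<bullet> d = - inner a x" by (auto simp: d_def inner_commute)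
  ultimately show False using ab(1) \<open>inner a x > b\<close> by linarith
qed



lemma dual_vec:
  fixes V :: "'k \<Rightarrow> 'a::euclidean_space"
  assumes inj: "inj_on V A" and ind: "independent (V ` A)" and l: "l \<in> A"
  shows "\<exists>e. \<forall>k\<in>A. e \<bullet> V k = (if k = l then 1 else 0)"
proof -
  define W where "W = V ` A - {V l}"
  have nv: "V l \<notin> span W"
    using ind l unfolding W_def dependent_def by blast
  obtain y z where y: "y \<in> span W" and z: "\<And>w. w \<in> span W \<Longrightarrow> orthogonal z w" and vz: "V l = y + z"
    using orthogonal_subspace_decomp_exists[of W "V l"] by metis
  have z0: "z \<noteq> 0" using nv y vz by auto
  define e where "e = z /\<^sub>R (z \<bullet> z)"
  have zy: "z \<bullet> y = 0" using z[OF y] by (simp add: orthogonal_def)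
  show ?thesis
  proof (intro exI ballI)
    fix k assume k: "k \<in> A"
    show "e \<bullet> V k = (if k = l then 1 else 0)"
    proof (cases "k = l")
      case True
      have "e \<bullet> V l = (z \<bullet> y + z \<bullet> z) / (z \<bullet> z)" unfolding e_def vz by (simp add: inner_add_right field_simps)
      also have "\<dots> = 1" using zy z0 by simp
      finally show ?thesis using True by simp
    next
      case False
      then have "V k \<noteq> V l" using inj k l by (auto dest: inj_onD)
      then have "V k \<in> span W" unfolding W_def using k by (intro span_base) auto
      then have "z \<bullet> V k = 0" using z by (simp add: orthogonal_def)
      then show ?thesis using False unfolding e_def by simp
    qed
  qed
qed



lemma min_unique:
  assumes sc: "strictly_convex_on UNIV F" and x: "is_minimizer F x" and y: "is_minimizer F y"
  shows "x = y"
proof (rule ccontr)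
  assume ne: "x \<noteq> y"
  have H: "\<forall>u. 0 < u \<and> u < 1 \<longrightarrow> F ((1 - u) *\<^sub>R x + u *\<^sub>R y) < (1 - u) * F x + u * F y"
    using sc ne unfolding strictly_convex_on_def by blast
  have "F ((1/2) *\<^sub>R x + (1/2) *\<^sub>R y) < F x / 2 + F y / 2"
    using spec[OF H, of "1/2"] by simp
  moreover have "F x \<le> F y" "F y \<le> F x" "F x \<le> F ((1/2) *\<^sub>R x + (1/2) *\<^sub>R y)"
    using x y unfolding is_minimizer_def by auto
  ultimately show False by linarith
qed

lemma min_exists:
  fixes F :: "'a::euclidean_space \<Rightarrow> real"
  assumes c: "continuous_on UNIV F" and co: "coercive F"
  shows "\<exists>x. is_minimizer F x"
proof -
  have "eventually (\<lambda>x. F x > F 0) at_infinity"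
    using co unfolding coercive_def by (simp add: filterlim_at_top_dense)
  then obtain R where R: "\<And>x. R \<le> norm x \<Longrightarrow> F x > F 0" unfolding eventually_at_infinity by blast
  obtain z where z: "z \<in> cball 0 \<bar>R\<bar>" "\<forall>y\<in>cball 0 \<bar>R\<bar>. F z \<le> F y"
    using continuous_attains_inf[OF compact_cball _ continuous_on_subset[OF c], of 0 "\<bar>R\<bar>"]
    by auto
  have "F z \<le> F y" for y
  proof (cases "y \<in> cball 0 \<bar>R\<bar>")
    case True then show ?thesis using z by blast
  next
    case False
    then have "F y > F 0" using R by (intro R) auto
    moreover have "F z \<le> F 0" using z by auto
    ultimately show ?thesis by linarith
  qed
  then show ?thesis unfolding is_minimizer_def by blast
qed



lemma cont_min:
  fixes F :: "real \<Rightarrow> 'a::euclidean_space \<Rightarrow> real" and X :: "real \<Rightarrow> 'a"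
  assumes mins: "\<forall>\<rho>\<in>I. is_minimizer (F \<rho>) (X \<rho>)"
    and scv: "\<forall>\<rho>\<in>I. strictly_convex_on UNIV (F \<rho>)"
    and r0: "\<rho>0 \<in> I"
    and Fe: "\<And>\<rho> x. F \<rho> x = F \<rho>0 x + (\<rho> - \<rho>0) * P x"
    and cF: "continuous_on UNIV (F \<rho>0)" and cP: "continuous_on UNIV P"
  shows "continuous (at \<rho>0 within I) X"
  unfolding continuous_within_eps_delta
proof (intro allI impI)
  fix \<epsilon> :: real assume \<epsilon>: "\<epsilon> > 0"
  define x0 where "x0 = X \<rho>0"
  have m0: "is_minimizer (F \<rho>0) x0" using mins r0 x0_def by blast
  obtain \<delta>0 where \<delta>0: "\<delta>0 > 0" "\<And>y. dist y x0 = \<epsilon> \<Longrightarrow> F \<rho>0 y \<ge> F \<rho>0 x0 + \<delta>0"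
  proof (cases "sphere x0 \<epsilon> = {}")
    case True
    then show ?thesis by (intro that[of 1]) (auto simp: dist_commute)
  next
    case False
    obtain y0 where y0: "y0 \<in> sphere x0 \<epsilon>" "\<forall>y\<in>sphere x0 \<epsilon>. F \<rho>0 y0 \<le> F \<rho>0 y"
      using continuous_attains_inf[OF compact_sphere False continuous_on_subset[OF cF]] by auto
    have "F \<rho>0 y0 > F \<rho>0 x0"
    proof (rule ccontr)
      assume "\<not> F \<rho>0 y0 > F \<rho>0 x0"
      then have "is_minimizer (F \<rho>0) y0" using m0 unfolding is_minimizer_def by (meson not_le order_trans)
      then have "y0 = x0" using min_unique[OF _ m0] scv r0 by blast
      then show False using y0(1) \<epsilon> by simp
    qed
    then show ?thesis
      by (intro that[of "F \<rho>0 y0 - F \<rho>0 x0"]) (use y0 in \<open>auto simp: dist_commute\<close>)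
  qed
  have "compact (P ` cball x0 \<epsilon>)"
    by (intro compact_continuous_image continuous_on_subset[OF cP]) auto
  then obtain M where M: "M > 0" "\<And>y. y \<in> cball x0 \<epsilon> \<Longrightarrow> \<bar>P y\<bar> \<le> M"
    using compact_imp_bounded[of "P ` cball x0 \<epsilon>"] unfolding bounded_pos by auto
  define \<delta> where "\<delta> = \<delta>0 / (2 * M)"
  have \<delta>: "\<delta> > 0" using \<delta>0 M by (simp add: \<delta>_def)
  show "\<exists>\<delta>>0. \<forall>\<rho>\<in>I. dist \<rho> \<rho>0 < \<delta> \<longrightarrow> dist (X \<rho>) (X \<rho>0) < \<epsilon>"
  proof (intro exI[of _ \<delta>] conjI \<delta> ballI impI)
    fix \<rho> assume \<rho>: "\<rho> \<in> I" "dist \<rho> \<rho>0 < \<delta>"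
    have small: "\<bar>\<rho> - \<rho>0\<bar> * M < \<delta>0 / 2"
      using \<rho>(2) M(1) unfolding \<delta>_def dist_real_def by (simp add: field_simps)
    have bnd: "\<bar>(\<rho> - \<rho>0) * P y\<bar> \<le> \<bar>\<rho> - \<rho>0\<bar> * M" if "y \<in> cball x0 \<epsilon>" for y
      using M(2)[OF that] by (simp add: abs_mult mult_left_mono)
    have sph: "F \<rho> y > F \<rho> x0" if "dist y x0 = \<epsilon>" for y
    proof -
      have "y \<in> cball x0 \<epsilon>" "x0 \<in> cball x0 \<epsilon>" using that \<epsilon> by (auto simp: dist_commute)
      then have "\<bar>(\<rho> - \<rho>0) * P y\<bar> \<le> \<bar>\<rho> - \<rho>0\<bar> * M" "\<bar>(\<rho> - \<rho>0) * P x0\<bar> \<le> \<bar>\<rho> - \<rho>0\<bar> * M"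
        using bnd by auto
      then show ?thesis using \<delta>0(2)[OF that] small Fe[of \<rho> y] Fe[of \<rho> x0] by linarith
    qed
    define x where "x = X \<rho>"
    have mx: "is_minimizer (F \<rho>) x" using mins \<rho> x_def by blast
    show "dist (X \<rho>) (X \<rho>0) < \<epsilon>"
    proof (rule ccontr)
      assume "\<not> ?thesis"
      then have dd: "dist x x0 \<ge> \<epsilon>" unfolding x_def x0_def by simp
      have "F \<rho> x > F \<rho> x0"
      proof (cases "dist x x0 = \<epsilon>")
        case True then show ?thesis by (rule sph)
      next
        case False
        with dd have dd': "dist x x0 > \<epsilon>" by simp
        define t where "t = \<epsilon> / dist x x0"
        have dpos: "dist x x0 > 0" using dd' \<epsilon> by linarith
        have t: "0 < t" "t < 1" unfolding t_def using dd' \<epsilon> dpos by (simp_all add: divide_less_eq)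
        define y where "y = (1 - t) *\<^sub>R x0 + t *\<^sub>R x"
        have "y - x0 = t *\<^sub>R (x - x0)" unfolding y_def by (simp add: algebra_simps)
        then have "dist y x0 = t * dist x x0" using t by (simp add: dist_norm)
        also have "\<dots> = \<epsilon>" using dpos unfolding t_def by simp
        finally have "F \<rho> y > F \<rho> x0" by (rule sph)
        moreover have "x0 \<noteq> x" using dpos by auto
        then have "F \<rho> y < (1 - t) * F \<rho> x0 + t * F \<rho> x"
          using scv \<rho>(1) t unfolding strictly_convex_on_def y_def by blast
        ultimately have "t * F \<rho> x0 < t * F \<rho> x" by (simp add: algebra_simps)
        then show ?thesis using t by simp
      qed
      then show False using mx unfolding is_minimizer_def by (meson not_le)
    qed
  qed
qed



lemma kkt:
  fixes f :: "'a::euclidean_space \<Rightarrow> real" and g h :: "nat \<Rightarrow> 'a \<Rightarrow> real" and r s :: nat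
  assumes fder: "\<forall>x. (f has_derivative (\<lambda>d. d \<bullet> grad f x)) (at x)"
    and gder: "\<forall>i<r. \<forall>x. (g i has_derivative (\<lambda>d. d \<bullet> grad (g i) x)) (at x)"
    and hder: "\<forall>j<s. \<forall>x. (h j has_derivative (\<lambda>d. d \<bullet> grad (h j) x)) (at x)"
    and \<rho>: "\<rho> > 0" and mx: "is_minimizer (penE f g r h s \<rho>) x"
  shows "\<exists>sc tc. opt_cond f g r h s \<rho> x sc tc"
proof -
  define lo where "lo i = (if g i x > 0 then 1 else -1 :: real)" for i
  define hi where "hi i = (if g i x < 0 then -1 else 1 :: real)" for i
  define lo' where "lo' j = (if h j x > 0 then 1 else 0 :: real)" for j
  define hi' where "hi' j = (if h j x < 0 then 0 else 1 :: real)" for j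
  define sg where "sg i d = (if g i x > 0 then d \<bullet> grad (g i) x else if g i x < 0 then - (d \<bullet> grad (g i) x)
     else \<bar>d \<bullet> grad (g i) x\<bar>)" for i d
  define sh where "sh j d = (if h j x > 0 then d \<bullet> grad (h j) x else if h j x < 0 then 0
     else max 0 (d \<bullet> grad (h j) x))" for j d
  have step1: "0 \<le> d \<bullet> grad f x + \<rho> * (\<Sum>i<r. sg i d) + \<rho> * (\<Sum>j<s. sh j d)" for d
  proof -
    let ?Q = "\<lambda>t. (f (x + t *\<^sub>R d) - f x) / t
       + \<rho> * (\<Sum>i<r. (\<bar>g i (x + t *\<^sub>R d)\<bar> - \<bar>g i x\<bar>) / t)
       + \<rho> * (\<Sum>j<s. (max 0 (h j (x + t *\<^sub>R d)) - max 0 (h j x)) / t)"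
    have lim: "(?Q \<longlongrightarrow> d \<bullet> grad f x + \<rho> * (\<Sum>i<r. sg i d) + \<rho> * (\<Sum>j<s. sh j d)) (at_right 0)"
      unfolding sg_def sh_def
      by (intro tendsto_add tendsto_mult tendsto_const tendsto_sum quot_lin quot_abs quot_max)
         (use fder gder hder in auto)
    have "eventually (\<lambda>t. 0 \<le> ?Q t) (at_right 0)"
      using ev_pos
    proof eventually_elim
      case (elim t)
      have "penE f g r h s \<rho> x \<le> penE f g r h s \<rho> (x + t *\<^sub>R d)" using mx unfolding is_minimizer_def by blast
      then have "0 \<le> (penE f g r h s \<rho> (x + t *\<^sub>R d) - penE f g r h s \<rho> x) / t" using elim by simp
      also have "(penE f g r h s \<rho> (x + t *\<^sub>R d) - penE f g r h s \<rho> x) / t = ?Q t"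
        using elim unfolding penE_def sum_divide_distrib[symmetric] by (simp add: sum_subtractf field_simps)
      finally show ?case .
    qed
    then show ?thesis using lim by (intro tendsto_lowerbound[of ?Q]) auto
  qed
  have eg: "max (lo i * (grad (g i) x \<bullet> d)) (hi i * (grad (g i) x \<bullet> d)) = sg i d" for i d
    unfolding lo_def hi_def sg_def by (auto simp: inner_commute max_def)
  have eh: "max (lo' j * (grad (h j) x \<bullet> d)) (hi' j * (grad (h j) x \<bullet> d)) = sh j d" for j d
    unfolding lo'_def hi'_def sh_def by (auto simp: inner_commute max_def)
  have ineq: "\<forall>d. ((1/\<rho>) *\<^sub>R grad f x) \<bullet> d + (\<Sum>k<r. max (lo k * (grad (g k) x \<bullet> d)) (hi k * (grad (g k) x \<bullet> d)))
                  + (\<Sum>k<s. max (lo' k * (grad (h k) x \<bullet> d)) (hi' k * (grad (h k) x \<bullet> d))) \<ge> 0"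
  proof
    fix d
    have "0 \<le> (1/\<rho>) * (d \<bullet> grad f x + \<rho> * (\<Sum>i<r. sg i d) + \<rho> * (\<Sum>j<s. sh j d))"
      using step1[of d] \<rho> by simp
    also have "\<dots> = ((1/\<rho>) *\<^sub>R grad f x) \<bullet> d + (\<Sum>i<r. sg i d) + (\<Sum>j<s. sh j d)"
      using \<rho> by (simp add: algebra_simps inner_commute)
    finally show "((1/\<rho>) *\<^sub>R grad f x) \<bullet> d + (\<Sum>k<r. max (lo k * (grad (g k) x \<bullet> d)) (hi k * (grad (g k) x \<bullet> d)))
                  + (\<Sum>k<s. max (lo' k * (grad (h k) x \<bullet> d)) (hi' k * (grad (h k) x \<bullet> d))) \<ge> 0"
      unfolding eg eh .
  qed
  have lh: "\<forall>k<r. lo k \<le> hi k" "\<forall>k<s. lo' k \<le> hi' k"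
    unfolding lo_def hi_def lo'_def hi'_def by auto
  obtain sc tc where b: "\<forall>k<r. lo k \<le> sc k \<and> sc k \<le> hi k" "\<forall>k<s. lo' k \<le> tc k \<and> tc k \<le> hi' k"
    and eq: "(1/\<rho>) *\<^sub>R grad f x + (\<Sum>k<r. sc k *\<^sub>R grad (g k) x) + (\<Sum>k<s. tc k *\<^sub>R grad (h k) x) = 0"
    using duality[OF lh ineq] by blast
  have "\<rho> *\<^sub>R ((1/\<rho>) *\<^sub>R grad f x + (\<Sum>k<r. sc k *\<^sub>R grad (g k) x) + (\<Sum>k<s. tc k *\<^sub>R grad (h k) x)) = 0"
    using eq by simp
  then have eq2: "grad f x + \<rho> *\<^sub>R (\<Sum>k<r. sc k *\<^sub>R grad (g k) x) + \<rho> *\<^sub>R (\<Sum>k<s. tc k *\<^sub>R grad (h k) x) = 0"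
    using \<rho> by (simp add: scaleR_add_right)
  show ?thesis unfolding opt_cond_def
    by (intro exI[of _ sc] exI[of _ tc] conjI eq2)
      (use b in \<open>auto simp: lo_def hi_def lo'_def hi'_def split: if_splits\<close>)
qed



lemma dual_extract:
  fixes V :: "'k \<Rightarrow> 'a::real_inner"
  assumes fin: "finite K" and A: "A \<subseteq> K" and l: "l \<in> A"
    and e: "\<forall>k\<in>A. e \<bullet> V' k = (if k = l then 1 else 0)"
  shows "e \<bullet> (\<Sum>k\<in>K. C k *\<^sub>R V k) = C l + (\<Sum>k\<in>K - A. C k * (e \<bullet> V k))
          + (\<Sum>k\<in>A. C k * (e \<bullet> V k - e \<bullet> V' k))"
proof -
  have "e \<bullet> (\<Sum>k\<in>K. C k *\<^sub>R V k) = (\<Sum>k\<in>K. C k * (e \<bullet> V k))"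
    by (simp add: inner_sum_right)
  also have "\<dots> = (\<Sum>k\<in>K - A. C k * (e \<bullet> V k)) + (\<Sum>k\<in>A. C k * (e \<bullet> V k))"
    using sum.subset_diff[OF A fin] by simp
  also have "(\<Sum>k\<in>A. C k * (e \<bullet> V k)) = (\<Sum>k\<in>A. C k * (e \<bullet> V k - e \<bullet> V' k)) + (\<Sum>k\<in>A. C k * (e \<bullet> V' k))"
    by (simp add: sum.distrib[symmetric] algebra_simps)
  also have "(\<Sum>k\<in>A. C k * (e \<bullet> V' k)) = (\<Sum>k\<in>A. if k = l then C k else 0)"
    using e by (intro sum.cong) auto
  also have "\<dots> = C l" using l finite_subset[OF A fin] by simp
  finally show ?thesis by simp
qed

lemma coef_unique:
  fixes V :: "'k \<Rightarrow> 'a::real_inner"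
  assumes fin: "finite K" and A: "A \<subseteq> K"
    and eq: "(\<Sum>k\<in>K. C k *\<^sub>R V k) = (\<Sum>k\<in>K. C' k *\<^sub>R V k)"
    and out: "\<forall>k\<in>K - A. C k = C' k"
    and dual: "\<forall>l\<in>A. \<exists>e. \<forall>k\<in>A. e \<bullet> V k = (if k = l then 1 else 0)"
  shows "\<forall>k\<in>K. C k = C' k"
proof
  fix l assume lK: "l \<in> K"
  show "C l = C' l"
  proof (cases "l \<in> A")
    case False then show ?thesis using out lK by auto
  next
    case True
    then obtain e where e: "\<forall>k\<in>A. e \<bullet> V k = (if k = l then 1 else 0)" using dual by blast
    have "(\<Sum>k\<in>K - A. C k * (e \<bullet> V k)) = (\<Sum>k\<in>K - A. C' k * (e \<bullet> V k))"
      using out by (intro sum.cong) auto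
    then show ?thesis
      using dual_extract[OF fin A True e, of C V] dual_extract[OF fin A True e, of C' V] eq by simp
  qed
qed

lemma coef_cont:
  fixes V :: "real \<Rightarrow> 'k \<Rightarrow> 'a::real_inner" and R :: "real \<Rightarrow> 'a" and C :: "real \<Rightarrow> 'k \<Rightarrow> real"
  assumes fin: "finite K" and A: "A \<subseteq> K"
    and eq: "\<forall>\<rho>\<in>I. (\<Sum>k\<in>K. C \<rho> k *\<^sub>R V \<rho> k) = R \<rho>"
    and r0: "\<rho>0 \<in> I"
    and Vc: "\<forall>k\<in>K. ((\<lambda>\<rho>. V \<rho> k) \<longlongrightarrow> V \<rho>0 k) (at \<rho>0 within I)"
    and Rc: "(R \<longlongrightarrow> R \<rho>0) (at \<rho>0 within I)"
    and bnd: "\<forall>\<rho>\<in>I. \<forall>k\<in>K. \<bar>C \<rho> k\<bar> \<le> 1"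
    and out: "\<forall>k\<in>K - A. eventually (\<lambda>\<rho>. C \<rho> k = C \<rho>0 k) (at \<rho>0 within I)"
    and dual: "\<forall>l\<in>A. \<exists>e. \<forall>k\<in>A. e \<bullet> V \<rho>0 k = (if k = l then 1 else 0)"
  shows "\<forall>k\<in>K. ((\<lambda>\<rho>. C \<rho> k) \<longlongrightarrow> C \<rho>0 k) (at \<rho>0 within I)"
proof
  fix l assume lK: "l \<in> K"
  have evI: "eventually (\<lambda>\<rho>. \<rho> \<in> I) (at \<rho>0 within I)"
    by (simp add: eventually_at_filter)
  show "((\<lambda>\<rho>. C \<rho> l) \<longlongrightarrow> C \<rho>0 l) (at \<rho>0 within I)"
  proof (cases "l \<in> A")
    case False
    then have "eventually (\<lambda>\<rho>. C \<rho> l = C \<rho>0 l) (at \<rho>0 within I)"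
      using out lK by auto
    then have "eventually (\<lambda>\<rho>. C \<rho>0 l = C \<rho> l) (at \<rho>0 within I)"
      by (rule eventually_mono) simp
    then show ?thesis by (rule Lim_transform_eventually[OF tendsto_const])
  next
    case True
    then obtain e where e: "\<forall>k\<in>A. e \<bullet> V \<rho>0 k = (if k = l then 1 else 0)" using dual by blast
    define \<Phi> where "\<Phi> \<rho> = e \<bullet> R \<rho> - (\<Sum>k\<in>K - A. C \<rho> k * (e \<bullet> V \<rho> k))
          - (\<Sum>k\<in>A. C \<rho> k * (e \<bullet> V \<rho> k - e \<bullet> V \<rho>0 k))" for \<rho>
    have id: "C \<rho> l = \<Phi> \<rho>" if "\<rho> \<in> I" for \<rho>
      using dual_extract[OF fin A True e, of "C \<rho>" "V \<rho>"] eq that unfolding \<Phi>_def by simp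
    have lim1: "((\<lambda>\<rho>. \<Sum>k\<in>K - A. C \<rho> k * (e \<bullet> V \<rho> k)) \<longlongrightarrow> (\<Sum>k\<in>K - A. C \<rho>0 k * (e \<bullet> V \<rho>0 k))) (at \<rho>0 within I)"
    proof (intro tendsto_sum tendsto_mult tendsto_inner tendsto_const)
      fix k assume k: "k \<in> K - A"
      show "((\<lambda>\<rho>. C \<rho> k) \<longlongrightarrow> C \<rho>0 k) (at \<rho>0 within I)"
      proof -
        have "eventually (\<lambda>\<rho>. C \<rho> k = C \<rho>0 k) (at \<rho>0 within I)" using out k by auto
        then have "eventually (\<lambda>\<rho>. C \<rho>0 k = C \<rho> k) (at \<rho>0 within I)"
          by (rule eventually_mono) simp
        then show ?thesis by (rule Lim_transform_eventually[OF tendsto_const])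
      qed
      show "((\<lambda>\<rho>. V \<rho> k) \<longlongrightarrow> V \<rho>0 k) (at \<rho>0 within I)" using Vc k by auto
    qed
    have lim2: "((\<lambda>\<rho>. \<Sum>k\<in>A. C \<rho> k * (e \<bullet> V \<rho> k - e \<bullet> V \<rho>0 k)) \<longlongrightarrow> 0) (at \<rho>0 within I)"
    proof (rule Lim_null_comparison)
      show "eventually (\<lambda>\<rho>. norm (\<Sum>k\<in>A. C \<rho> k * (e \<bullet> V \<rho> k - e \<bullet> V \<rho>0 k))
              \<le> (\<Sum>k\<in>A. \<bar>e \<bullet> V \<rho> k - e \<bullet> V \<rho>0 k\<bar>)) (at \<rho>0 within I)"
        using evI
      proof eventually_elim
        case (elim \<rho>)
        have "norm (\<Sum>k\<in>A. C \<rho> k * (e \<bullet> V \<rho> k - e \<bullet> V \<rho>0 k)) \<le> (\<Sum>k\<in>A. \<bar>C \<rho> k * (e \<bullet> V \<rho> k - e \<bullet> V \<rho>0 k)\<bar>)"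
          by (simp add: sum_abs)
        also have "\<dots> \<le> (\<Sum>k\<in>A. \<bar>e \<bullet> V \<rho> k - e \<bullet> V \<rho>0 k\<bar>)"
        proof (rule sum_mono)
          fix k assume "k \<in> A"
          then have "\<bar>C \<rho> k\<bar> \<le> 1" using bnd elim A by auto
          then show "\<bar>C \<rho> k * (e \<bullet> V \<rho> k - e \<bullet> V \<rho>0 k)\<bar> \<le> \<bar>e \<bullet> V \<rho> k - e \<bullet> V \<rho>0 k\<bar>"
            by (simp add: abs_mult mult_left_le_one_le)
        qed
        finally show ?case .
      qed
      have "((\<lambda>\<rho>. \<Sum>k\<in>A. \<bar>e \<bullet> V \<rho> k - e \<bullet> V \<rho>0 k\<bar>) \<longlongrightarrow> (\<Sum>k\<in>A. \<bar>e \<bullet> V \<rho>0 k - e \<bullet> V \<rho>0 k\<bar>)) (at \<rho>0 within I)"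
        using Vc A by (intro tendsto_sum tendsto_rabs tendsto_diff tendsto_inner tendsto_const) auto
      then show "((\<lambda>\<rho>. \<Sum>k\<in>A. \<bar>e \<bullet> V \<rho> k - e \<bullet> V \<rho>0 k\<bar>) \<longlongrightarrow> 0) (at \<rho>0 within I)" by simp
    qed
    have "(\<Phi> \<longlongrightarrow> e \<bullet> R \<rho>0 - (\<Sum>k\<in>K - A. C \<rho>0 k * (e \<bullet> V \<rho>0 k)) - 0) (at \<rho>0 within I)"
      unfolding \<Phi>_def by (intro tendsto_diff lim1 lim2 tendsto_inner tendsto_const Rc)
    moreover have "\<Phi> \<rho>0 = e \<bullet> R \<rho>0 - (\<Sum>k\<in>K - A. C \<rho>0 k * (e \<bullet> V \<rho>0 k)) - 0"
      unfolding \<Phi>_def by simp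
    ultimately have "(\<Phi> \<longlongrightarrow> C \<rho>0 l) (at \<rho>0 within I)" using id[OF r0] by simp
    moreover have "eventually (\<lambda>\<rho>. \<Phi> \<rho> = C \<rho> l) (at \<rho>0 within I)"
      using evI by eventually_elim (simp add: id)
    ultimately show ?thesis by (rule Lim_transform_eventually)
  qed
qed



definition Kset :: "nat \<Rightarrow> nat \<Rightarrow> (nat + nat) set" where
  "Kset r s = Inl ` {..<r} \<union> Inr ` {..<s}"
definition vecf :: "(nat \<Rightarrow> 'a::real_inner \<Rightarrow> real) \<Rightarrow> (nat \<Rightarrow> 'a \<Rightarrow> real) \<Rightarrow> 'a \<Rightarrow> nat + nat \<Rightarrow> 'a" where
  "vecf g h x = (\<lambda>k. case k of Inl i \<Rightarrow> grad (g i) x | Inr j \<Rightarrow> grad (h j) x)"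
definition cof :: "(nat \<Rightarrow> real) \<Rightarrow> (nat \<Rightarrow> real) \<Rightarrow> nat + nat \<Rightarrow> real" where
  "cof sc tc k = (case k of Inl i \<Rightarrow> sc i | Inr j \<Rightarrow> tc j)"
definition cv :: "(nat \<Rightarrow> 'a \<Rightarrow> real) \<Rightarrow> (nat \<Rightarrow> 'a \<Rightarrow> real) \<Rightarrow> 'a \<Rightarrow> nat + nat \<Rightarrow> real" where
  "cv g h x k = (case k of Inl i \<Rightarrow> g i x | Inr j \<Rightarrow> h j x)"
definition detc :: "(nat \<Rightarrow> 'a \<Rightarrow> real) \<Rightarrow> (nat \<Rightarrow> 'a \<Rightarrow> real) \<Rightarrow> 'a \<Rightarrow> nat + nat \<Rightarrow> real" where
  "detc g h x k = (case k of Inl i \<Rightarrow> (if g i x > 0 then 1 else -1) | Inr j \<Rightarrow> (if h j x > 0 then 1 else 0))"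
definition act :: "(nat \<Rightarrow> 'a \<Rightarrow> real) \<Rightarrow> nat \<Rightarrow> (nat \<Rightarrow> 'a \<Rightarrow> real) \<Rightarrow> nat \<Rightarrow> 'a \<Rightarrow> (nat + nat) set" where
  "act g r h s x = Inl ` {i. i < r \<and> g i x = 0} \<union> Inr ` {j. j < s \<and> h j x = 0}"

lemma Kset_finite: "finite (Kset r s)" by (simp add: Kset_def)
lemma act_sub: "act g r h s x \<subseteq> Kset r s" by (auto simp: act_def Kset_def)
lemma act_char: "k \<in> Kset r s \<Longrightarrow> k \<in> act g r h s x \<longleftrightarrow> cv g h x k = 0"
  by (auto simp: act_def Kset_def cv_def)

lemma sum_split:
  "(\<Sum>i<r. sc i *\<^sub>R grad (g i) x) + (\<Sum>j<s. tc j *\<^sub>R grad (h j) x) = (\<Sum>k\<in>Kset r s. cof sc tc k *\<^sub>R vecf g h x k)"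
proof -
  have "(\<Sum>k\<in>Kset r s. cof sc tc k *\<^sub>R vecf g h x k) =
     (\<Sum>k\<in>Inl ` {..<r}. cof sc tc k *\<^sub>R vecf g h x k) + (\<Sum>k\<in>Inr ` {..<s}. cof sc tc k *\<^sub>R vecf g h x k)"
    unfolding Kset_def by (rule sum.union_disjoint) auto
  also have "(\<Sum>k\<in>Inl ` {..<r}. cof sc tc k *\<^sub>R vecf g h x k) = (\<Sum>i<r. sc i *\<^sub>R grad (g i) x)"
    by (subst sum.reindex) (auto simp: cof_def vecf_def)
  also have "(\<Sum>k\<in>Inr ` {..<s}. cof sc tc k *\<^sub>R vecf g h x k) = (\<Sum>j<s. tc j *\<^sub>R grad (h j) x)"
    by (subst sum.reindex) (auto simp: cof_def vecf_def)
  finally show ?thesis by simp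
qed

lemma oc_facts:
  assumes oc: "opt_cond f g r h s \<rho> x sc tc" and \<rho>: "\<rho> > 0"
  shows "(\<Sum>k\<in>Kset r s. cof sc tc k *\<^sub>R vecf g h x k) = - ((1/\<rho>) *\<^sub>R grad f x)"
    "\<forall>k\<in>Kset r s. cv g h x k \<noteq> 0 \<longrightarrow> cof sc tc k = detc g h x k"
    "\<forall>k\<in>Kset r s. \<bar>cof sc tc k\<bar> \<le> 1"
proof -
  have e: "grad f x + \<rho> *\<^sub>R ((\<Sum>i<r. sc i *\<^sub>R grad (g i) x) + (\<Sum>j<s. tc j *\<^sub>R grad (h j) x)) = 0"
    using oc unfolding opt_cond_def by (simp add: scaleR_add_right add.assoc)
  then have "\<rho> *\<^sub>R ((\<Sum>i<r. sc i *\<^sub>R grad (g i) x) + (\<Sum>j<s. tc j *\<^sub>R grad (h j) x)) = - grad f x"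
    by (simp add: eq_neg_iff_add_eq_0 add.commute)
  then have "(1/\<rho>) *\<^sub>R (\<rho> *\<^sub>R ((\<Sum>i<r. sc i *\<^sub>R grad (g i) x) + (\<Sum>j<s. tc j *\<^sub>R grad (h j) x))) = - ((1/\<rho>) *\<^sub>R grad f x)"
    by simp
  then have "(\<Sum>i<r. sc i *\<^sub>R grad (g i) x) + (\<Sum>j<s. tc j *\<^sub>R grad (h j) x) = - ((1/\<rho>) *\<^sub>R grad f x)"
    using \<rho> by (simp only: scaleR_scaleR) simp
  then show "(\<Sum>k\<in>Kset r s. cof sc tc k *\<^sub>R vecf g h x k) = - ((1/\<rho>) *\<^sub>R grad f x)"
    by (simp add: sum_split)
  have gi: "(g i x < 0 \<longrightarrow> sc i = -1) \<and> (g i x = 0 \<longrightarrow> -1 \<le> sc i \<and> sc i \<le> 1) \<and> (g i x > 0 \<longrightarrow> sc i = 1)"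
    if "i < r" for i using oc that unfolding opt_cond_def by blast
  have hj: "(h j x < 0 \<longrightarrow> tc j = 0) \<and> (h j x = 0 \<longrightarrow> 0 \<le> tc j \<and> tc j \<le> 1) \<and> (h j x > 0 \<longrightarrow> tc j = 1)"
    if "j < s" for j using oc that unfolding opt_cond_def by blast
  show "\<forall>k\<in>Kset r s. cv g h x k \<noteq> 0 \<longrightarrow> cof sc tc k = detc g h x k"
  proof (intro ballI impI)
    fix k assume k: "k \<in> Kset r s" and c: "cv g h x k \<noteq> 0"
    show "cof sc tc k = detc g h x k"
    proof (cases k)
      case (Inl i)
      then have "i < r" "g i x \<noteq> 0" using k c by (auto simp: Kset_def cv_def)
      then show ?thesis using gi[of i] Inl by (auto simp: cof_def detc_def)
    next
      case (Inr j)
      then have "j < s" "h j x \<noteq> 0" using k c by (auto simp: Kset_def cv_def)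
      then show ?thesis using hj[of j] Inr by (auto simp: cof_def detc_def)
    qed
  qed
  show "\<forall>k\<in>Kset r s. \<bar>cof sc tc k\<bar> \<le> 1"
  proof
    fix k assume k: "k \<in> Kset r s"
    show "\<bar>cof sc tc k\<bar> \<le> 1"
    proof (cases k)
      case (Inl i)
      then have "i < r" using k by (auto simp: Kset_def)
      then show ?thesis using gi[of i] Inl by (cases "g i x < 0"; cases "g i x > 0") (auto simp: cof_def)
    next
      case (Inr j)
      then have "j < s" using k by (auto simp: Kset_def)
      then show ?thesis using hj[of j] Inr by (cases "h j x < 0"; cases "h j x > 0") (auto simp: cof_def)
    qed
  qed
qed

lemma indep_dual:
  fixes g h :: "nat \<Rightarrow> 'a::euclidean_space \<Rightarrow> real"
  assumes "active_grads_indep g r h s x"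
  shows "\<forall>l\<in>act g r h s x. \<exists>e. \<forall>k\<in>act g r h s x. e \<bullet> vecf g h x k = (if k = l then 1 else 0)"
proof
  fix l assume l: "l \<in> act g r h s x"
  have a: "inj_on (vecf g h x) (act g r h s x) \<and> independent (vecf g h x ` act g r h s x)"
    using assms unfolding active_grads_indep_def Let_def act_def vecf_def .
  show "\<exists>e. \<forall>k\<in>act g r h s x. e \<bullet> vecf g h x k = (if k = l then 1 else 0)"
    using dual_vec[OF conjunct1[OF a] conjunct2[OF a] l] .
qed



theorem lemma1:
  fixes f :: "'a::euclidean_space \<Rightarrow> real"
    and g h :: "nat \<Rightarrow> 'a \<Rightarrow> real"
    and r s :: nat
  assumes f_cvx: "convex_on UNIV f" and f_C2: "twice_cont_diff f"
    and g_aff: "\<forall>i<r. affine_fun (g i)"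
    and h_cvx: "\<forall>j<s. convex_on UNIV (h j)" and h_C2: "\<forall>j<s. twice_cont_diff (h j)"
  shows
    "(\<forall>\<rho>\<ge>0. strictly_convex_on UNIV (penE f g r h s \<rho>) \<longrightarrow>
        (\<forall>x y. is_minimizer (penE f g r h s \<rho>) x \<and> is_minimizer (penE f g r h s \<rho>) y \<longrightarrow> x = y))
   \<and>
    (\<forall>\<rho>0 (I :: real set). \<rho>0 > 0 \<and> open I \<and> is_interval I \<and> \<rho>0 \<in> I \<and> I \<subseteq> {0..} \<and>
       (\<forall>\<rho>\<in>I. strictly_convex_on UNIV (penE f g r h s \<rho>) \<and> coercive (penE f g r h s \<rho>)) \<longrightarrow>
       (\<forall>\<rho>\<in>I. \<exists>!x. is_minimizer (penE f g r h s \<rho>) x) \<and>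
       continuous (at \<rho>0 within I) (\<lambda>\<rho>. THE x. is_minimizer (penE f g r h s \<rho>) x) \<and>
       ((\<forall>\<rho>\<in>I. active_grads_indep g r h s (THE x. is_minimizer (penE f g r h s \<rho>) x)) \<longrightarrow>
          (\<exists>S T :: real \<Rightarrow> nat \<Rightarrow> real.
             (\<forall>\<rho>\<in>I.
                opt_cond f g r h s \<rho> (THE x. is_minimizer (penE f g r h s \<rho>) x) (S \<rho>) (T \<rho>) \<and>
                (\<forall>sc tc. opt_cond f g r h s \<rho> (THE x. is_minimizer (penE f g r h s \<rho>) x) sc tc \<longrightarrow>
                   (\<forall>i<r. sc i = S \<rho> i) \<and> (\<forall>j<s. tc j = T \<rho> j))) \<and>
             (\<forall>i<r. continuous (at \<rho>0 within I) (\<lambda>\<rho>. S \<rho> i)) \<and>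
             (\<forall>j<s. continuous (at \<rho>0 within I) (\<lambda>\<rho>. T \<rho> j)))))"
proof -
  have fder: "\<forall>x. (f has_derivative (\<lambda>d. d \<bullet> grad f x)) (at x)" and fgc: "continuous_on UNIV (grad f)"
    using C2_grad[OF f_C2] by auto
  have hder: "\<forall>j<s. \<forall>x. (h j has_derivative (\<lambda>d. d \<bullet> grad (h j) x)) (at x)"
    and hgc: "\<forall>j<s. continuous_on UNIV (grad (h j))"
    using C2_grad h_C2 by blast+
  have gboth: "(\<forall>x. (g i has_derivative (\<lambda>d. d \<bullet> grad (g i) x)) (at x)) \<and> continuous_on UNIV (grad (g i))"
    if ir: "i < r" for i
  proof -
    have "affine_fun (g i)" using g_aff ir by blast
    then obtain a where a: "\<forall>x. (g i has_derivative (\<lambda>d. d \<bullet> a)) (at x)" "\<forall>x. grad (g i) x = a"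
      by (rule aff_grad)
    have "grad (g i) = (\<lambda>_. a)" using a(2) by auto
    then show ?thesis using a(1) by simp
  qed
  have gder: "\<forall>i<r. \<forall>x. (g i has_derivative (\<lambda>d. d \<bullet> grad (g i) x)) (at x)"
    and ggc: "\<forall>i<r. continuous_on UNIV (grad (g i))" using gboth by auto
  have cf: "isCont f x" for x using fder has_derivative_continuous by blast
  have cg: "isCont (g i) x" if "i < r" for i x using gder that has_derivative_continuous by blast
  have ch: "isCont (h j) x" if "j < s" for j x using hder that has_derivative_continuous by blast
  define P where "P x = (\<Sum>i<r. \<bar>g i x\<bar>) + (\<Sum>j<s. max 0 (h j x))" for x
  have Eeq: "penE f g r h s \<rho> x = f x + \<rho> * P x" for \<rho> x
    unfolding penE_def P_def by (simp add: algebra_simps)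
  have cPx: "isCont P x" for x
    unfolding P_def by (intro continuous_intros) (auto intro: cg ch)
  have cP: "continuous_on UNIV P" by (intro continuous_at_imp_continuous_on ballI cPx)
  have cE: "continuous_on UNIV (penE f g r h s \<rho>)" for \<rho>
    unfolding Eeq by (intro continuous_at_imp_continuous_on ballI continuous_intros cf cPx)
  have part1: "\<forall>\<rho>\<ge>0. strictly_convex_on UNIV (penE f g r h s \<rho>) \<longrightarrow>
        (\<forall>x y. is_minimizer (penE f g r h s \<rho>) x \<and> is_minimizer (penE f g r h s \<rho>) y \<longrightarrow> x = y)"
  proof (intro allI impI)
    fix \<rho> x y assume "strictly_convex_on UNIV (penE f g r h s \<rho>)"
      "is_minimizer (penE f g r h s \<rho>) x \<and> is_minimizer (penE f g r h s \<rho>) y"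
    then show "x = y" using min_unique by blast
  qed
  show ?thesis
  proof (rule conjI[OF part1], intro allI impI)
    fix \<rho>0 and I :: "real set"
    assume H: "\<rho>0 > 0 \<and> open I \<and> is_interval I \<and> \<rho>0 \<in> I \<and> I \<subseteq> {0..} \<and>
       (\<forall>\<rho>\<in>I. strictly_convex_on UNIV (penE f g r h s \<rho>) \<and> coercive (penE f g r h s \<rho>))"
    then have r0: "\<rho>0 \<in> I" and oI: "open I" and Ipos: "I \<subseteq> {0..}" and r0p: "\<rho>0 > 0"
      and scv: "\<forall>\<rho>\<in>I. strictly_convex_on UNIV (penE f g r h s \<rho>)"
      and coe: "\<forall>\<rho>\<in>I. coercive (penE f g r h s \<rho>)" by blast+
    have posI: "\<rho> > 0" if rI: "\<rho> \<in> I" for \<rho>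
    proof -
      obtain e where e: "e > 0" "ball \<rho> e \<subseteq> I" using oI rI openE by blast
      then have "\<rho> - e/2 \<in> I" by (auto simp: dist_real_def)
      then have "\<rho> - e/2 \<ge> 0" using Ipos by auto
      then show ?thesis using e by linarith
    qed
    have exu: "\<forall>\<rho>\<in>I. \<exists>!x. is_minimizer (penE f g r h s \<rho>) x"
    proof
      fix \<rho> assume \<rho>I: "\<rho> \<in> I"
      have sc: "strictly_convex_on UNIV (penE f g r h s \<rho>)" using scv \<rho>I by blast
      obtain x where x: "is_minimizer (penE f g r h s \<rho>) x"
        using min_exists[OF cE coe[rule_format, OF \<rho>I]] by blast
      show "\<exists>!x. is_minimizer (penE f g r h s \<rho>) x"
        using x min_unique[OF sc] by blast
    qed
    define X where "X \<rho> = (THE x. is_minimizer (penE f g r h s \<rho>) x)" for \<rho>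
    have mins: "\<forall>\<rho>\<in>I. is_minimizer (penE f g r h s \<rho>) (X \<rho>)"
      unfolding X_def
    proof
      fix \<rho> assume "\<rho> \<in> I"
      then have "\<exists>!x. is_minimizer (penE f g r h s \<rho>) x" using exu by blast
      then show "is_minimizer (penE f g r h s \<rho>) (THE x. is_minimizer (penE f g r h s \<rho>) x)" by (rule theI')
    qed
    have contX: "continuous (at \<rho>0 within I) X"
    proof (rule cont_min[OF mins scv r0 _ cE cP])
      fix \<rho> x show "penE f g r h s \<rho> x = penE f g r h s \<rho>0 x + (\<rho> - \<rho>0) * P x"
        unfolding Eeq by (simp add: algebra_simps)
    qed
    show "(\<forall>\<rho>\<in>I. \<exists>!x. is_minimizer (penE f g r h s \<rho>) x) \<and>
       continuous (at \<rho>0 within I) (\<lambda>\<rho>. THE x. is_minimizer (penE f g r h s \<rho>) x) \<and>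
       ((\<forall>\<rho>\<in>I. active_grads_indep g r h s (THE x. is_minimizer (penE f g r h s \<rho>) x)) \<longrightarrow>
          (\<exists>S T :: real \<Rightarrow> nat \<Rightarrow> real.
             (\<forall>\<rho>\<in>I.
                opt_cond f g r h s \<rho> (THE x. is_minimizer (penE f g r h s \<rho>) x) (S \<rho>) (T \<rho>) \<and>
                (\<forall>sc tc. opt_cond f g r h s \<rho> (THE x. is_minimizer (penE f g r h s \<rho>) x) sc tc \<longrightarrow>
                   (\<forall>i<r. sc i = S \<rho> i) \<and> (\<forall>j<s. tc j = T \<rho> j))) \<and>
             (\<forall>i<r. continuous (at \<rho>0 within I) (\<lambda>\<rho>. S \<rho> i)) \<and>
             (\<forall>j<s. continuous (at \<rho>0 within I) (\<lambda>\<rho>. T \<rho> j))))"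
      unfolding X_def[symmetric]
    proof (intro conjI exu contX impI)
      assume ind: "\<forall>\<rho>\<in>I. active_grads_indep g r h s (X \<rho>)"
      have kex: "\<exists>p. opt_cond f g r h s \<rho> (X \<rho>) (fst p) (snd p)" if \<rho>I: "\<rho> \<in> I" for \<rho>
      proof -
        have "is_minimizer (penE f g r h s \<rho>) (X \<rho>)" using mins \<rho>I by blast
        then obtain sc tc where "opt_cond f g r h s \<rho> (X \<rho>) sc tc"
          using kkt[OF fder gder hder posI[OF \<rho>I]] by blast
        then show ?thesis by (intro exI[of _ "(sc, tc)"]) simp
      qed
      define S where "S \<rho> = fst (SOME p. opt_cond f g r h s \<rho> (X \<rho>) (fst p) (snd p))" for \<rho>
      define T where "T \<rho> = snd (SOME p. opt_cond f g r h s \<rho> (X \<rho>) (fst p) (snd p))" for \<rho>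
      have ocST: "opt_cond f g r h s \<rho> (X \<rho>) (S \<rho>) (T \<rho>)" if "\<rho> \<in> I" for \<rho>
        unfolding S_def T_def using someI_ex[OF kex[OF that]] .
      have uniq: "(\<forall>i<r. sc i = S \<rho> i) \<and> (\<forall>j<s. tc j = T \<rho> j)"
        if "\<rho> \<in> I" "opt_cond f g r h s \<rho> (X \<rho>) sc tc" for \<rho> sc tc
      proof -
        note o1 = oc_facts[OF that(2) posI[OF that(1)]] and o2 = oc_facts[OF ocST[OF that(1)] posI[OF that(1)]]
        have "\<forall>k\<in>Kset r s. cof sc tc k = cof (S \<rho>) (T \<rho>) k"
        proof (rule coef_unique[OF Kset_finite act_sub])
          show "(\<Sum>k\<in>Kset r s. cof sc tc k *\<^sub>R vecf g h (X \<rho>) k) = (\<Sum>k\<in>Kset r s. cof (S \<rho>) (T \<rho>) k *\<^sub>R vecf g h (X \<rho>) k)"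
            using o1(1) o2(1) by simp
          show "\<forall>k\<in>Kset r s - act g r h s (X \<rho>). cof sc tc k = cof (S \<rho>) (T \<rho>) k"
          proof
            fix k assume k: "k \<in> Kset r s - act g r h s (X \<rho>)"
            then have kK: "k \<in> Kset r s" and c: "cv g h (X \<rho>) k \<noteq> 0" using act_char[of k r s g h "X \<rho>"] by auto
            show "cof sc tc k = cof (S \<rho>) (T \<rho>) k" using o1(2) o2(2) kK c by simp
          qed
          show "\<forall>l\<in>act g r h s (X \<rho>). \<exists>e. \<forall>k\<in>act g r h s (X \<rho>). e \<bullet> vecf g h (X \<rho>) k = (if k = l then 1 else 0)"
            using indep_dual[OF ind[rule_format, OF that(1)]] .
        qed
        then have a: "cof sc tc k = cof (S \<rho>) (T \<rho>) k" if "k \<in> Kset r s" for k using that by blast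
        show ?thesis
        proof (intro conjI allI impI)
          fix i assume "i < r"
          then show "sc i = S \<rho> i" using a[of "Inl i"] by (simp add: Kset_def cof_def)
        next
          fix j assume "j < s"
          then show "tc j = T \<rho> j" using a[of "Inr j"] by (simp add: Kset_def cof_def)
        qed
      qed
      define x0 where "x0 = X \<rho>0"
      have Xlim: "(X \<longlongrightarrow> x0) (at \<rho>0 within I)" using contX unfolding continuous_within x0_def .
      have evI: "eventually (\<lambda>\<rho>. \<rho> \<in> I) (at \<rho>0 within I)"
        by (simp add: eventually_at_filter)
      have cont_all: "\<forall>k\<in>Kset r s. ((\<lambda>\<rho>. cof (S \<rho>) (T \<rho>) k) \<longlongrightarrow> cof (S \<rho>0) (T \<rho>0) k) (at \<rho>0 within I)"
      proof (rule coef_cont[OF Kset_finite act_sub[of g r h s x0], where V="\<lambda>\<rho>. vecf g h (X \<rho>)"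
            and R="\<lambda>\<rho>. - ((1/\<rho>) *\<^sub>R grad f (X \<rho>))"])
        show "\<forall>\<rho>\<in>I. (\<Sum>k\<in>Kset r s. cof (S \<rho>) (T \<rho>) k *\<^sub>R vecf g h (X \<rho>) k) = - ((1/\<rho>) *\<^sub>R grad f (X \<rho>))"
        proof
          fix \<rho> assume \<rho>I: "\<rho> \<in> I"
          show "(\<Sum>k\<in>Kset r s. cof (S \<rho>) (T \<rho>) k *\<^sub>R vecf g h (X \<rho>) k) = - ((1/\<rho>) *\<^sub>R grad f (X \<rho>))"
            using oc_facts(1)[OF ocST[OF \<rho>I] posI[OF \<rho>I]] .
        qed
        show "\<rho>0 \<in> I" by (rule r0)
        show "\<forall>k\<in>Kset r s. ((\<lambda>\<rho>. vecf g h (X \<rho>) k) \<longlongrightarrow> vecf g h (X \<rho>0) k) (at \<rho>0 within I)"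
        proof
          fix k assume k: "k \<in> Kset r s"
          show "((\<lambda>\<rho>. vecf g h (X \<rho>) k) \<longlongrightarrow> vecf g h (X \<rho>0) k) (at \<rho>0 within I)"
          proof (cases k)
            case (Inl i)
            then have "i < r" using k by (auto simp: Kset_def)
            then have "isCont (grad (g i)) x0" using ggc continuous_on_eq_continuous_at[OF open_UNIV] by blast
            then show ?thesis using isCont_tendsto_compose[OF _ Xlim] Inl unfolding vecf_def x0_def by simp
          next
            case (Inr j)
            then have "j < s" using k by (auto simp: Kset_def)
            then have "isCont (grad (h j)) x0" using hgc continuous_on_eq_continuous_at[OF open_UNIV] by blast
            then show ?thesis using isCont_tendsto_compose[OF _ Xlim] Inr unfolding vecf_def x0_def by simp
          qed
        qed
        have "isCont (grad f) x0" using fgc continuous_on_eq_continuous_at[OF open_UNIV] by blast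
        then have gl: "((\<lambda>\<rho>. grad f (X \<rho>)) \<longlongrightarrow> grad f x0) (at \<rho>0 within I)"
          using isCont_tendsto_compose[OF _ Xlim] by blast
        show "((\<lambda>\<rho>. - ((1/\<rho>) *\<^sub>R grad f (X \<rho>))) \<longlongrightarrow> - ((1/\<rho>0) *\<^sub>R grad f (X \<rho>0))) (at \<rho>0 within I)"
          unfolding x0_def[symmetric] using r0p
          by (intro tendsto_minus tendsto_scaleR tendsto_divide tendsto_const gl tendsto_ident_at) simp
        show "\<forall>\<rho>\<in>I. \<forall>k\<in>Kset r s. \<bar>cof (S \<rho>) (T \<rho>) k\<bar> \<le> 1"
        proof
          fix \<rho> assume \<rho>I: "\<rho> \<in> I"
          show "\<forall>k\<in>Kset r s. \<bar>cof (S \<rho>) (T \<rho>) k\<bar> \<le> 1"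
            using oc_facts(3)[OF ocST[OF \<rho>I] posI[OF \<rho>I]] .
        qed
        show "\<forall>l\<in>act g r h s x0. \<exists>e. \<forall>k\<in>act g r h s x0. e \<bullet> vecf g h (X \<rho>0) k = (if k = l then 1 else 0)"
          using indep_dual[OF ind[rule_format, OF r0]] unfolding x0_def .
        show "\<forall>k\<in>Kset r s - act g r h s x0. eventually (\<lambda>\<rho>. cof (S \<rho>) (T \<rho>) k = cof (S \<rho>0) (T \<rho>0) k) (at \<rho>0 within I)"
        proof
          fix k assume k: "k \<in> Kset r s - act g r h s x0"
          then have kK: "k \<in> Kset r s" and c0: "cv g h x0 k \<noteq> 0" using act_char[of k r s g h x0] by auto
          have cvl: "((\<lambda>\<rho>. cv g h (X \<rho>) k) \<longlongrightarrow> cv g h x0 k) (at \<rho>0 within I)"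
          proof (cases k)
            case (Inl i)
            then have "i < r" using kK by (auto simp: Kset_def)
            then show ?thesis using isCont_tendsto_compose[OF cg Xlim] Inl unfolding cv_def by simp
          next
            case (Inr j)
            then have "j < s" using kK by (auto simp: Kset_def)
            then show ?thesis using isCont_tendsto_compose[OF ch Xlim] Inr unfolding cv_def by simp
          qed
          have detsame: "detc g h y k = detc g h x0 k" if "(cv g h y k > 0) = (cv g h x0 k > 0)" for y
            using that by (cases k) (auto simp: detc_def cv_def)
          have C0: "cof (S \<rho>0) (T \<rho>0) k = detc g h x0 k"
            using bspec[OF oc_facts(2)[OF ocST[OF r0] r0p] kK] c0 unfolding x0_def by simp
          have "eventually (\<lambda>\<rho>. cv g h (X \<rho>) k \<noteq> 0 \<and> (cv g h (X \<rho>) k > 0) = (cv g h x0 k > 0)) (at \<rho>0 within I)"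
          proof (cases "cv g h x0 k > 0")
            case True
            have "eventually (\<lambda>\<rho>. cv g h (X \<rho>) k > 0) (at \<rho>0 within I)"
              using order_tendstoD(1)[OF cvl True] .
            then show ?thesis by eventually_elim (use True in auto)
          next
            case False
            then have n: "cv g h x0 k < 0" using c0 by linarith
            have "eventually (\<lambda>\<rho>. cv g h (X \<rho>) k < 0) (at \<rho>0 within I)"
              using order_tendstoD(2)[OF cvl n] .
            then show ?thesis by eventually_elim (use False in auto)
          qed
          then show "eventually (\<lambda>\<rho>. cof (S \<rho>) (T \<rho>) k = cof (S \<rho>0) (T \<rho>0) k) (at \<rho>0 within I)"
            using evI
          proof eventually_elim
            case (elim \<rho>)
            have "cof (S \<rho>) (T \<rho>) k = detc g h (X \<rho>) k"
              using bspec[OF oc_facts(2)[OF ocST[OF elim(2)] posI[OF elim(2)]] kK] elim(1) by simp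
            moreover have "detc g h (X \<rho>) k = detc g h x0 k" using detsame[of "X \<rho>"] elim(1) by blast
            ultimately show ?case using C0 by simp
          qed
        qed
      qed
      show "\<exists>S T :: real \<Rightarrow> nat \<Rightarrow> real.
             (\<forall>\<rho>\<in>I.
                opt_cond f g r h s \<rho> (X \<rho>) (S \<rho>) (T \<rho>) \<and>
                (\<forall>sc tc. opt_cond f g r h s \<rho> (X \<rho>) sc tc \<longrightarrow>
                   (\<forall>i<r. sc i = S \<rho> i) \<and> (\<forall>j<s. tc j = T \<rho> j))) \<and>
             (\<forall>i<r. continuous (at \<rho>0 within I) (\<lambda>\<rho>. S \<rho> i)) \<and>
             (\<forall>j<s. continuous (at \<rho>0 within I) (\<lambda>\<rho>. T \<rho> j))"
      proof -
        have A: "\<forall>\<rho>\<in>I. opt_cond f g r h s \<rho> (X \<rho>) (S \<rho>) (T \<rho>) \<and>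
                (\<forall>sc tc. opt_cond f g r h s \<rho> (X \<rho>) sc tc \<longrightarrow>
                   (\<forall>i<r. sc i = S \<rho> i) \<and> (\<forall>j<s. tc j = T \<rho> j))"
        proof (intro ballI conjI allI impI)
          fix \<rho> assume "\<rho> \<in> I"
          then show "opt_cond f g r h s \<rho> (X \<rho>) (S \<rho>) (T \<rho>)" by (rule ocST)
        next
          fix \<rho> sc tc i assume "\<rho> \<in> I" "opt_cond f g r h s \<rho> (X \<rho>) sc tc" "i < r"
          then show "sc i = S \<rho> i" using uniq by blast
        next
          fix \<rho> sc tc j assume "\<rho> \<in> I" "opt_cond f g r h s \<rho> (X \<rho>) sc tc" "j < s"
          then show "tc j = T \<rho> j" using uniq by blast
        qed
        have B: "\<forall>i<r. continuous (at \<rho>0 within I) (\<lambda>\<rho>. S \<rho> i)"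
        proof (intro allI impI)
          fix i assume "i < r"
          then have "Inl i \<in> Kset r s" by (simp add: Kset_def)
          then have "((\<lambda>\<rho>. cof (S \<rho>) (T \<rho>) (Inl i)) \<longlongrightarrow> cof (S \<rho>0) (T \<rho>0) (Inl i)) (at \<rho>0 within I)"
            using cont_all by blast
          then show "continuous (at \<rho>0 within I) (\<lambda>\<rho>. S \<rho> i)"
            unfolding continuous_within cof_def by simp
        qed
        have C: "\<forall>j<s. continuous (at \<rho>0 within I) (\<lambda>\<rho>. T \<rho> j)"
        proof (intro allI impI)
          fix j assume "j < s"
          then have "Inr j \<in> Kset r s" by (simp add: Kset_def)
          then have "((\<lambda>\<rho>. cof (S \<rho>) (T \<rho>) (Inr j)) \<longlongrightarrow> cof (S \<rho>0) (T \<rho>0) (Inr j)) (at \<rho>0 within I)"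
            using cont_all by blast
          then show "continuous (at \<rho>0 within I) (\<lambda>\<rho>. T \<rho> j)"
            unfolding continuous_within cof_def by simp
        qed
        show ?thesis by (intro exI[of _ S] exI[of _ T] conjI A B C)
      qed
    qed
  qed
qed


end
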